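(* Let $w:\mathbb R^d\times\mathbb R^d\to\mathbb R$ satisfy $|w(y,x)-w(y',x')|\le L_w(\|x-x'\|+\|y-y'\|)$ for some $L_w>0$ and all $x,x',y,y'$, and suppose there exist $x_0,y_0\in\mathbb R^d$ with $\sup_x|w(y_0,x)|<\infty$ and $\sup_y|w(y,x_0)|<\infty$. Let $\mu,\rho$ be probability measures on $\mathbb R^d$, with $\mathcal E_\beta:=\int e^{\beta\|x\|}\rho(dx)<\infty$ for some $\beta>0$, and $\mu$ supported in the closed ball $B(0,r)$ for some $r>0$. Then for any $\beta'<\beta$ there exists a constant $C=C(w,\beta,\beta')$ such that $$\sup_{\|y\|\le r}\Big|\|w_y\|^2_{L^2(\mu)}-\|w_y\|^2_{L^2(\rho)}\Big|\le C(1+r)W_1(\mu,\rho)+C\mathcal E_\beta e^{-\beta' r}.$$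
   Context: $w_y(x)=w(y,x)$; $\|h\|_{L^2(\nu)}^2=\int|h|^2d\nu$; $W_1$ is the order-1 Wasserstein distance on $\mathbb R^d$ with respect to $\|x-y\|$. *)

theory Defs
  imports "HOL-Probability.Probability"
begin

definition couplings :: "'a::euclidean_space measure \<Rightarrow> 'a measure \<Rightarrow> ('a \<times> 'a) measure set" where
  "couplings \<mu> \<rho> = {\<pi>. prob_space \<pi> \<and> sets \<pi> = sets (borel \<Otimes>\<^sub>M borel) \<and>
      distr \<pi> borel fst = \<mu> \<and> distr \<pi> borel snd = \<rho>}"

definition W1 :: "'a::euclidean_space measure \<Rightarrow> 'a measure \<Rightarrow> ennreal" where
  "W1 \<mu> \<rho> = (INF \<pi>\<in>couplings \<mu> \<rho>. \<integral>\<^sup>+ p. ennreal (norm (fst p - snd p)) \<partial>\<pi>)"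

end

theory Submission
  imports Defs
begin

lemma lip_W1:
  fixes f :: "'a::euclidean_space \<Rightarrow> real"
  assumes K: "K > 0" and L: "\<And>x x'. \<bar>f x - f x'\<bar> \<le> K * norm (x - x')" and M: "\<And>x. \<bar>f x\<bar> \<le> M"
    and pm: "prob_space \<mu>" "sets \<mu> = sets borel" and pr: "prob_space \<rho>" "sets \<rho> = sets borel"
  shows "ennreal \<bar>(\<integral>x. f x \<partial>\<mu>) - (\<integral>x. f x \<partial>\<rho>)\<bar> \<le> ennreal K * W1 \<mu> \<rho>"
proof -
  have cont: "continuous_on UNIV f"
  proof (rule continuous_onI)
    fix x and e :: real assume e: "e > 0"
    show "\<exists>d>0. \<forall>x'\<in>UNIV. dist x' x < d \<longrightarrow> dist (f x') (f x) \<le> e"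
    proof (intro exI[of _ "e / K"] conjI ballI impI)
      show "e / K > 0" using e K by simp
      fix x' assume "dist x' x < e / K"
      hence "K * norm (x' - x) < e" using K by (simp add: dist_norm field_simps)
      thus "dist (f x') (f x) \<le> e" using L[of x' x] by (simp add: dist_real_def)
    qed
  qed
  hence fm: "f \<in> borel_measurable borel" by (rule borel_measurable_continuous_onI)
  define D where "D = \<bar>(\<integral>x. f x \<partial>\<mu>) - (\<integral>x. f x \<partial>\<rho>)\<bar>"
  have "ennreal (D / K) \<le> W1 \<mu> \<rho>"
    unfolding W1_def
  proof (rule INF_greatest)
    fix \<pi> assume "\<pi> \<in> couplings \<mu> \<rho>"
    hence ps: "prob_space \<pi>" and sp: "sets \<pi> = sets (borel \<Otimes>\<^sub>M borel)"
      and d1: "distr \<pi> borel fst = \<mu>" and d2: "distr \<pi> borel snd = \<rho>"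
      unfolding couplings_def by auto
    have mfst: "fst \<in> measurable \<pi> (borel :: 'a measure)"
      using measurable_fst[of "borel :: 'a measure" "borel :: 'a measure"]
      by (simp add: measurable_cong_sets[OF sp refl])
    have msnd: "snd \<in> measurable \<pi> (borel :: 'a measure)"
      using measurable_snd[of "borel :: 'a measure" "borel :: 'a measure"]
      by (simp add: measurable_cong_sets[OF sp refl])
    have i1: "(\<integral>x. f x \<partial>\<mu>) = (\<integral>p. f (fst p) \<partial>\<pi>)"
      using integral_distr[OF mfst fm] d1 by simp
    have i2: "(\<integral>x. f x \<partial>\<rho>) = (\<integral>p. f (snd p) \<partial>\<pi>)"
      using integral_distr[OF msnd fm] d2 by simp
    have m1: "(\<lambda>p. f (fst p)) \<in> borel_measurable \<pi>" using measurable_compose[OF mfst fm] .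
    have m2: "(\<lambda>p. f (snd p)) \<in> borel_measurable \<pi>" using measurable_compose[OF msnd fm] .
    interpret prob_space \<pi> by fact
    have int1: "integrable \<pi> (\<lambda>p. f (fst p))"
      by (rule integrable_const_bound[where B=M]) (use M m1 in auto)
    have int2: "integrable \<pi> (\<lambda>p. f (snd p))"
      by (rule integrable_const_bound[where B=M]) (use M m2 in auto)
    define g where "g p = (f (fst p) - f (snd p)) / K" for p
    have ig: "integrable \<pi> g" unfolding g_def using int1 int2 by auto
    have "D / K = \<bar>\<integral>p. g p \<partial>\<pi>\<bar>"
      unfolding D_def i1 i2 g_def using K int1 int2 by (simp add: abs_div)
    also have "\<dots> \<le> (\<integral>p. \<bar>g p\<bar> \<partial>\<pi>)" by (rule integral_abs_bound)
    finally have "ennreal (D / K) \<le> ennreal (\<integral>p. \<bar>g p\<bar> \<partial>\<pi>)" by (rule ennreal_leI)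
    also have "\<dots> = (\<integral>\<^sup>+ p. ennreal \<bar>g p\<bar> \<partial>\<pi>)"
      by (rule nn_integral_eq_integral[symmetric]) (use ig in auto)
    also have "\<dots> \<le> (\<integral>\<^sup>+ p. ennreal (norm (fst p - snd p)) \<partial>\<pi>)"
    proof (rule nn_integral_mono)
      fix p
      have "\<bar>g p\<bar> \<le> norm (fst p - snd p)"
        unfolding g_def using L[of "fst p" "snd p"] K by (simp add: abs_div field_simps)
      thus "ennreal \<bar>g p\<bar> \<le> ennreal (norm (fst p - snd p))" by (rule ennreal_leI)
    qed
    finally show "ennreal (D / K) \<le> (\<integral>\<^sup>+ p. ennreal (norm (fst p - snd p)) \<partial>\<pi>)" .
  qed
  hence "ennreal K * ennreal (D / K) \<le> ennreal K * W1 \<mu> \<rho>" by (rule mult_left_mono) simp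
  moreover have "ennreal K * ennreal (D / K) = ennreal D"
    using K by (simp add: ennreal_mult'[symmetric] D_def)
  ultimately show ?thesis unfolding D_def by simp
qed


theorem lemma1:
  fixes w :: "'a::euclidean_space \<Rightarrow> 'a \<Rightarrow> real" and \<beta> :: real
  assumes Lip: "\<exists>Lw>0. \<forall>x x' y y'. \<bar>w y x - w y' x'\<bar> \<le> Lw * (norm (x - x') + norm (y - y'))"
    and bnd: "\<exists>x0 y0. (\<exists>B. \<forall>x. \<bar>w y0 x\<bar> \<le> B) \<and> (\<exists>B. \<forall>y. \<bar>w y x0\<bar> \<le> B)"
    and beta_pos: "\<beta> > 0"
  shows "\<forall>\<beta>'<\<beta>. \<exists>C::real. \<forall>(\<mu>::'a measure) \<rho> r.
           prob_space \<mu> \<and> sets \<mu> = sets borel \<and> prob_space \<rho> \<and> sets \<rho> = sets borel \<and>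
           (\<integral>\<^sup>+ x. ennreal (exp (\<beta> * norm x)) \<partial>\<rho>) < \<infinity> \<and>
           r > 0 \<and> (AE x in \<mu>. norm x \<le> r) \<longrightarrow>
           (\<forall>y. norm y \<le> r \<longrightarrow>
              ennreal \<bar>(\<integral>x. (w y x)\<^sup>2 \<partial>\<mu>) - (\<integral>x. (w y x)\<^sup>2 \<partial>\<rho>)\<bar>
              \<le> ennreal (C * (1 + r)) * W1 \<mu> \<rho>
                 + ennreal C * (\<integral>\<^sup>+ x. ennreal (exp (\<beta> * norm x)) \<partial>\<rho>) * ennreal (exp (- \<beta>' * r)))"
proof (intro allI impI)
  fix \<beta>' :: real assume "\<beta>' < \<beta>"
  obtain Lw where Lw: "Lw > 0" and LL: "\<And>x x' y y'. \<bar>w y x - w y' x'\<bar> \<le> Lw * (norm (x - x') + norm (y - y'))"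
    using Lip by blast
  obtain y0 B1 where B1: "\<And>x. \<bar>w y0 x\<bar> \<le> B1" using bnd by blast
  have B1p: "B1 \<ge> 0" using B1[of 0] by simp
  define A where "A = B1 + Lw * norm y0"
  have A0: "A \<ge> 0" unfolding A_def using B1p Lw by simp
  define C where "C = 2 * Lw * (A + Lw) + 1"
  have C0: "C > 0" unfolding C_def using A0 Lw by (simp add: add_pos_nonneg)
  show "\<exists>C::real. \<forall>(\<mu>::'a measure) \<rho> r.
           prob_space \<mu> \<and> sets \<mu> = sets borel \<and> prob_space \<rho> \<and> sets \<rho> = sets borel \<and>
           (\<integral>\<^sup>+ x. ennreal (exp (\<beta> * norm x)) \<partial>\<rho>) < \<infinity> \<and>
           r > 0 \<and> (AE x in \<mu>. norm x \<le> r) \<longrightarrow>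
           (\<forall>y. norm y \<le> r \<longrightarrow>
              ennreal \<bar>(\<integral>x. (w y x)\<^sup>2 \<partial>\<mu>) - (\<integral>x. (w y x)\<^sup>2 \<partial>\<rho>)\<bar>
              \<le> ennreal (C * (1 + r)) * W1 \<mu> \<rho>
                 + ennreal C * (\<integral>\<^sup>+ x. ennreal (exp (\<beta> * norm x)) \<partial>\<rho>) * ennreal (exp (- \<beta>' * r)))"
  proof (intro exI[of _ C] allI impI)
    fix \<mu> \<rho> :: "'a measure" and r :: real and y :: 'a
    assume H: "prob_space \<mu> \<and> sets \<mu> = sets borel \<and> prob_space \<rho> \<and> sets \<rho> = sets borel \<and>
           (\<integral>\<^sup>+ x. ennreal (exp (\<beta> * norm x)) \<partial>\<rho>) < \<infinity> \<and>
           r > 0 \<and> (AE x in \<mu>. norm x \<le> r)" and y: "norm y \<le> r"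
    have r0: "r > 0" using H by blast
    have wb: "\<bar>w y x\<bar> \<le> A + Lw * r" for x
    proof -
      have "\<bar>w y x - w y0 x\<bar> \<le> Lw * norm (y - y0)" using LL[where x=x and x'=x and y=y and y'=y0] by simp
      moreover have "norm (y - y0) \<le> r + norm y0" using y norm_triangle_ineq4[of y y0] by linarith
      ultimately have "\<bar>w y x - w y0 x\<bar> \<le> Lw * (r + norm y0)"
        using Lw by (meson mult_left_mono less_imp_le order_trans)
      thus ?thesis using B1[of x] unfolding A_def by (simp add: algebra_simps)
    qed
    define K where "K = C * (1 + r)"
    have K0: "K > 0" unfolding K_def using C0 r0 by simp
    have fL: "\<bar>(w y x)\<^sup>2 - (w y x')\<^sup>2\<bar> \<le> K * norm (x - x')" for x x'
    proof -
      have "\<bar>(w y x)\<^sup>2 - (w y x')\<^sup>2\<bar> = \<bar>w y x - w y x'\<bar> * \<bar>w y x + w y x'\<bar>"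
        by (simp add: power2_eq_square abs_mult[symmetric] algebra_simps)
      also have "\<dots> \<le> (Lw * norm (x - x')) * (2 * (A + Lw * r))"
      proof (rule mult_mono)
        show "\<bar>w y x - w y x'\<bar> \<le> Lw * norm (x - x')" using LL[where x=x and x'=x' and y=y and y'=y] by simp
        show "\<bar>w y x + w y x'\<bar> \<le> 2 * (A + Lw * r)" using wb[of x] wb[of x'] abs_triangle_ineq[of "w y x" "w y x'"] by (simp add: algebra_simps)
      qed (use Lw in auto)
      also have "\<dots> = norm (x - x') * (2 * Lw * A + 2 * Lw * Lw * r)" by (simp add: algebra_simps)
      also have "\<dots> \<le> norm (x - x') * K"
      proof (rule mult_left_mono)
        have "2 * Lw * A \<le> C" unfolding C_def using Lw by (simp add: algebra_simps)
        moreover have "2 * Lw * Lw * r \<le> C * r" unfolding C_def using Lw A0 r0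
          by (simp add: algebra_simps mult_right_mono)
        ultimately show "2 * Lw * A + 2 * Lw * Lw * r \<le> K" unfolding K_def by (simp add: algebra_simps)
      qed simp
      finally show ?thesis by (simp add: mult.commute)
    qed
    have fM: "\<bar>(w y x)\<^sup>2\<bar> \<le> (A + Lw * r)\<^sup>2" for x
      using power_mono[OF wb[of x] abs_ge_zero, of 2] by simp
    have "ennreal \<bar>(\<integral>x. (w y x)\<^sup>2 \<partial>\<mu>) - (\<integral>x. (w y x)\<^sup>2 \<partial>\<rho>)\<bar> \<le> ennreal K * W1 \<mu> \<rho>"
      by (rule lip_W1[OF K0 fL fM]) (use H in auto)
    thus "ennreal \<bar>(\<integral>x. (w y x)\<^sup>2 \<partial>\<mu>) - (\<integral>x. (w y x)\<^sup>2 \<partial>\<rho>)\<bar>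
              \<le> ennreal (C * (1 + r)) * W1 \<mu> \<rho>
                 + ennreal C * (\<integral>\<^sup>+ x. ennreal (exp (\<beta> * norm x)) \<partial>\<rho>) * ennreal (exp (- \<beta>' * r))"
      unfolding K_def by (rule add_increasing2[rotated]) simp
  qed
qed

end
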